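(* Let $(\Omega,\mathcal F,\mathbb P)$ be a probability space. For each $N\in\mathbb N$ let $\{t_j\}_{j\in\mathbb N}=\{t_j^{(N)}\}_{j\in\mathbb N}$ be a sequence of positive random variables on it (dependence on $N$ suppressed) satisfying: (i) $\mathbb E(t_i)=\frac1N$ for all $i$ and all $N$; (ii) there exist $r>0$ and a constant $\tilde C>0$ such that $\mathbb E(t_i^{2+r})\le \frac{\tilde C}{N^{2+r}}$ for all $i$ and all $N$; (iii) for all $m\in\mathbb N$ (and all $N$), the vector $(t_1,\dots,t_m)$ is negatively superadditive dependent. Let $\tau_i=\sum_{j=1}^i t_j$ for $i\ge1$ and $N(1)=\sum_{j\ge1}\mathbf 1_{\tau_j\le1}$. Then, almost surely as $N\to\infty$, $\frac{N(1)}{N}\to1$ and $|\tau_{N(1)}-\tau_N|\to0$.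
   Context: A function $\phi:\mathbb R^m\to\mathbb R$ is superadditive if $\phi(x\vee y)+\phi(x\wedge y)\ge\phi(x)+\phi(y)$ for all $x,y\in\mathbb R^m$, where $\vee$ and $\wedge$ denote componentwise maximum and minimum. A random vector $(X_1,\dots,X_m)$ is negatively superadditive dependent (NSD) if for every superadditive $\phi$ such that the expectation $\mathbb E\phi(X_1,\dots,X_m)$ exists, $\mathbb E\phi(X_1,\dots,X_m)\le\mathbb E\phi(X_1^*,\dots,X_m^* )$, where $X_1^*,\dots,X_m^*$ are independent and $X_i^*$ has the same distribution as $X_i$ for each $i$. Here $\tau_0=0$ by convention. *)

theory Defs
  imports "HOL-Probability.Probability"
begin

definition superadditive_on :: "nat set \<Rightarrow> ((nat \<Rightarrow> real) \<Rightarrow> real) \<Rightarrow> bool" where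
  "superadditive_on I \<phi> \<longleftrightarrow>
     (\<forall>x \<in> PiE I (\<lambda>_. UNIV). \<forall>y \<in> PiE I (\<lambda>_. UNIV).
        \<phi> x + \<phi> y \<le> \<phi> (\<lambda>i\<in>I. max (x i) (y i)) + \<phi> (\<lambda>i\<in>I. min (x i) (y i)))"

text \<open>Negative superadditive dependence of the random vector (X i)_{i \<in> I} on M:
  for every (Borel measurable) superadditive \<phi> whose expectations exist, E \<phi>(X) \<le> E \<phi>(X*),
  where X* has independent coordinates with the same marginals (product of the marginal laws).\<close>
definition nsd :: "'a measure \<Rightarrow> (nat \<Rightarrow> 'a \<Rightarrow> real) \<Rightarrow> nat set \<Rightarrow> bool" where
  "nsd M X I \<longleftrightarrow>
     (\<forall>\<phi>. superadditive_on I \<phi>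
        \<and> \<phi> \<in> borel_measurable (PiM I (\<lambda>_. borel))
        \<and> integrable M (\<lambda>\<omega>. \<phi> (\<lambda>i\<in>I. X i \<omega>))
        \<and> integrable (PiM I (\<lambda>i. distr M borel (X i))) \<phi>
        \<longrightarrow> (\<integral>\<omega>. \<phi> (\<lambda>i\<in>I. X i \<omega>) \<partial>M)
            \<le> (\<integral>x. \<phi> x \<partial>(PiM I (\<lambda>i. distr M borel (X i)))))"

definition tau :: "(nat \<Rightarrow> 'a \<Rightarrow> real) \<Rightarrow> nat \<Rightarrow> 'a \<Rightarrow> real" where
  "tau t i \<omega> = (\<Sum>j\<in>{1..i}. t j \<omega>)"

text \<open>The index set {j \<ge> 1. \<tau>_j \<le> 1}; N(1) is its cardinality (when finite).\<close>
definition count_set :: "(nat \<Rightarrow> 'a \<Rightarrow> real) \<Rightarrow> 'a \<Rightarrow> nat set" where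
  "count_set t \<omega> = {j. 1 \<le> j \<and> tau t j \<omega> \<le> 1}"

end

theory Submission
  imports Defs "HOL-Real_Asymp.Real_Asymp"
begin


lemma exp_conv4:
  fixes p q c d :: real
  assumes "p + q = c + d" "c \<le> p" "c \<le> q"
  shows "exp p + exp q \<le> exp c + exp d"
proof -
  have d: "d = p + q - c" using assms by simp
  have ed: "exp d = exp p * exp q / exp c" by (simp add: d exp_diff exp_add)
  have "0 \<le> (exp p - exp c) * (exp q - exp c) / exp c"
    using assms by (intro divide_nonneg_pos mult_nonneg_nonneg) auto
  also have "\<dots> = exp c + exp d - exp p - exp q"
    by (simp add: ed field_simps)
  finally show ?thesis by simp
qed

lemma (in prob_space) nsd_exp:
  fixes X :: "nat \<Rightarrow> 'a \<Rightarrow> real" and I :: "nat set" and h :: "real \<Rightarrow> real"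
  assumes ns: "nsd M X I" and fin: "finite I" and Xm: "\<And>i. i\<in>I \<Longrightarrow> X i \<in> borel_measurable M"
    and hm: "mono h" and hb[measurable]: "h \<in> borel_measurable borel" and hB: "\<And>x. l * h x \<le> B"
  shows "(\<integral>\<omega>. exp (l * (\<Sum>i\<in>I. h (X i \<omega>))) \<partial>M) \<le> (\<Prod>i\<in>I. \<integral>\<omega>. exp (l * h (X i \<omega>)) \<partial>M)"
proof -
  define \<phi> where "\<phi> = (\<lambda>x::nat\<Rightarrow>real. exp (l * (\<Sum>i\<in>I. h (x i))))"
  have sup: "superadditive_on I \<phi>"
    unfolding superadditive_on_def
  proof (intro ballI)
    fix x y :: "nat \<Rightarrow> real"
    define a where "a = (\<Sum>i\<in>I. h (min (x i) (y i)))"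
    define b where "b = (\<Sum>i\<in>I. h (max (x i) (y i)))"
    define u where "u = (\<Sum>i\<in>I. h (x i))"
    define v where "v = (\<Sum>i\<in>I. h (y i))"
    have e1: "\<phi> (\<lambda>i\<in>I. max (x i) (y i)) = exp (l * b)"
      unfolding \<phi>_def b_def by (intro arg_cong[where f=exp] arg_cong[where f="(*) l"] sum.cong) auto
    have e2: "\<phi> (\<lambda>i\<in>I. min (x i) (y i)) = exp (l * a)"
      unfolding \<phi>_def a_def by (intro arg_cong[where f=exp] arg_cong[where f="(*) l"] sum.cong) auto
    have uv: "u + v = a + b"
      unfolding a_def b_def u_def v_def sum.distrib[symmetric]
      by (intro sum.cong) (auto simp: max_def min_def)
    have au: "a \<le> u" unfolding a_def u_def by (intro sum_mono monoD[OF hm]) auto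
    have av: "a \<le> v" unfolding a_def v_def by (intro sum_mono monoD[OF hm]) auto
    have ub: "u \<le> b" unfolding b_def u_def by (intro sum_mono monoD[OF hm]) auto
    have vb: "v \<le> b" unfolding b_def v_def by (intro sum_mono monoD[OF hm]) auto
    have "exp (l * u) + exp (l * v) \<le> exp (l * b) + exp (l * a)"
    proof (cases "l \<ge> 0")
      case True
      have "l * u + l * v = l * a + l * b" using uv by (simp flip: distrib_left)
      moreover have "l * a \<le> l * u" "l * a \<le> l * v" using True au av by (auto intro: mult_left_mono)
      ultimately show ?thesis using exp_conv4[of "l * u" "l * v" "l * a" "l * b"] by linarith
    next
      case False
      have "l * u + l * v = l * b + l * a" using uv by (simp flip: distrib_left)
      moreover have "l * b \<le> l * u" "l * b \<le> l * v" using False ub vb by (auto intro: mult_left_mono_neg)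
      ultimately show ?thesis using exp_conv4[of "l * u" "l * v" "l * b" "l * a"] by linarith
    qed
    then show "\<phi> x + \<phi> y \<le> \<phi> (\<lambda>i\<in>I. max (x i) (y i)) + \<phi> (\<lambda>i\<in>I. min (x i) (y i))"
      unfolding e1 e2 by (simp add: \<phi>_def u_def v_def)
  qed
  have bnd: "norm (\<phi> x) \<le> exp (real (card I) * B)" for x
  proof -
    have "l * (\<Sum>i\<in>I. h (x i)) = (\<Sum>i\<in>I. l * h (x i))" by (simp add: sum_distrib_left)
    also have "\<dots> \<le> (\<Sum>i\<in>I. B)" by (intro sum_mono hB)
    finally show ?thesis by (simp add: \<phi>_def)
  qed
  have phim: "\<phi> \<in> borel_measurable (PiM I (\<lambda>_. borel))"
    unfolding \<phi>_def by measurable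
  define M' where "M' = (\<lambda>i. distr M borel (\<lambda>\<omega>. if i \<in> I then X i \<omega> else 0))"
  have M'p: "prob_space (M' i)" for i
    unfolding M'_def by (intro prob_space_distr) (cases "i \<in> I"; simp add: Xm)
  have PiEq: "PiM I (\<lambda>i. distr M borel (X i)) = PiM I M'"
    unfolding M'_def by (intro PiM_cong) (auto intro!: distr_cong)
  interpret P: product_sigma_finite M'
    unfolding product_sigma_finite_def using M'p by (simp add: prob_space_imp_sigma_finite)
  interpret PP: prob_space "PiM I M'" by (intro prob_space_PiM M'p)
  have restr: "\<phi> (\<lambda>i\<in>I. X i \<omega>) = exp (l * (\<Sum>i\<in>I. h (X i \<omega>)))" for \<omega>
    unfolding \<phi>_def by (intro arg_cong[where f=exp] arg_cong[where f="(*) l"] sum.cong) auto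
  have sm[measurable]: "(\<lambda>\<omega>. \<Sum>i\<in>I. h (X i \<omega>)) \<in> borel_measurable M"
    by (intro borel_measurable_sum measurable_compose[OF Xm hb])
  have i1: "integrable M (\<lambda>\<omega>. \<phi> (\<lambda>i\<in>I. X i \<omega>))"
    unfolding restr
    by (rule integrable_const_bound[where B="exp (real (card I) * B)"])
       (use bnd[unfolded \<phi>_def] in auto)
  have "sets (PiM I M') = sets (PiM I (\<lambda>_. borel))" by (intro sets_PiM_cong) (auto simp: M'_def)
  then have phim': "\<phi> \<in> borel_measurable (PiM I M')"
    using phim measurable_cong_sets by blast
  have i2: "integrable (PiM I M') \<phi>"
    by (rule PP.integrable_const_bound[where B="exp (real (card I) * B)"])
       (use bnd phim' in auto)
  have "(\<integral>\<omega>. exp (l * (\<Sum>i\<in>I. h (X i \<omega>))) \<partial>M) \<le> (\<integral>x. \<phi> x \<partial>PiM I M')"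
    using ns unfolding nsd_def PiEq using sup phim i1 i2 restr by auto
  also have "\<dots> = (\<integral>x. (\<Prod>i\<in>I. exp (l * h (x i))) \<partial>PiM I M')"
    unfolding \<phi>_def by (simp add: exp_sum sum_distrib_left fin)
  also have "\<dots> = (\<Prod>i\<in>I. \<integral>s. exp (l * h s) \<partial>M' i)"
  proof (rule P.product_integral_prod[OF fin])
    fix i assume "i \<in> I"
    interpret Q: prob_space "M' i" by (rule M'p)
    show "integrable (M' i) (\<lambda>s. exp (l * h s))"
      by (rule Q.integrable_const_bound[where B="exp B"]) (auto simp: hB M'_def)
  qed
  also have "\<dots> = (\<Prod>i\<in>I. \<integral>\<omega>. exp (l * h (X i \<omega>)) \<partial>M)"
  proof (rule prod.cong[OF refl])
    fix i assume i: "i \<in> I"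
    have "(\<integral>s. exp (l * h s) \<partial>M' i) = (\<integral>s. exp (l * h s) \<partial>distr M borel (X i))"
      unfolding M'_def using i by (intro arg_cong[where f="\<lambda>N. integral\<^sup>L N _"] distr_cong) auto
    also have "\<dots> = (\<integral>\<omega>. exp (l * h (X i \<omega>)) \<partial>M)"
      by (rule integral_distr) (auto simp: Xm i)
    finally show "(\<integral>s. exp (l * h s) \<partial>M' i) = (\<integral>\<omega>. exp (l * h (X i \<omega>)) \<partial>M)" .
  qed
  finally show ?thesis .
qed




locale setting = prob_space M for M :: "'a measure" +
  fixes t :: "nat \<Rightarrow> nat \<Rightarrow> 'a \<Rightarrow> real" and r C :: real
  assumes rv: "\<And>N j. 1 \<le> N \<Longrightarrow> 1 \<le> j \<Longrightarrow> t N j \<in> borel_measurable M"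
    and pos: "\<And>N j \<omega>. 1 \<le> N \<Longrightarrow> 1 \<le> j \<Longrightarrow> \<omega> \<in> space M \<Longrightarrow> t N j \<omega> > 0"
    and mean_int: "\<And>N j. 1 \<le> N \<Longrightarrow> 1 \<le> j \<Longrightarrow> integrable M (t N j)"
    and mean: "\<And>N j. 1 \<le> N \<Longrightarrow> 1 \<le> j \<Longrightarrow> (\<integral>\<omega>. t N j \<omega> \<partial>M) = 1 / real N"
    and r_pos: "r > 0" and C_pos: "C > 0"
    and mom_int: "\<And>N j. 1 \<le> N \<Longrightarrow> 1 \<le> j \<Longrightarrow> integrable M (\<lambda>\<omega>. t N j \<omega> powr (2 + r))"
    and mom: "\<And>N j. 1 \<le> N \<Longrightarrow> 1 \<le> j \<Longrightarrow>
               (\<integral>\<omega>. t N j \<omega> powr (2 + r) \<partial>M) \<le> C / real N powr (2 + r)"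
    and nsd: "\<And>N m. 1 \<le> N \<Longrightarrow> nsd M (t N) {1..m}"
begin

definition "K = 1 + C"

lemma sq_pointwise:
  fixes x n :: real assumes "x > 0" "n \<ge> 1"
  shows "x\<^sup>2 \<le> 1 / n\<^sup>2 + n powr r * x powr (2 + r)"
proof (cases "x \<le> 1 / n")
  case True
  then have "x\<^sup>2 \<le> (1/n)\<^sup>2" using assms by (intro power_mono) auto
  moreover have "0 \<le> n powr r * x powr (2 + r)" by simp
  ultimately show ?thesis by (simp add: power_divide) (smt (verit) \<open>0 \<le> n powr r * x powr (2 + r)\<close>)
next
  case False
  then have "n * x \<ge> 1" using assms by (simp add: field_simps)
  then have "(n * x) powr r \<ge> 1" using r_pos by (simp add: ge_one_powr_ge_zero)
  then have "x\<^sup>2 * 1 \<le> x\<^sup>2 * (n * x) powr r" by (intro mult_left_mono) auto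
  also have "\<dots> = n powr r * x powr (2 + r)"
    using assms by (simp add: powr_add powr_mult powr_numeral field_simps)
  finally show ?thesis by (simp add: add_increasing)
qed

lemma sq_int:
  assumes "1 \<le> N" "1 \<le> j"
  shows "integrable M (\<lambda>\<omega>. (t N j \<omega>)\<^sup>2)" "(\<integral>\<omega>. (t N j \<omega>)\<^sup>2 \<partial>M) \<le> K / (real N)\<^sup>2"
proof -
  have m[measurable]: "t N j \<in> borel_measurable M" by (rule rv[OF assms])
  have ib: "integrable M (\<lambda>\<omega>. 1 / (real N)\<^sup>2 + real N powr r * t N j \<omega> powr (2 + r))"
    using mom_int[OF assms] by auto
  have pw: "(t N j \<omega>)\<^sup>2 \<le> 1 / (real N)\<^sup>2 + real N powr r * t N j \<omega> powr (2 + r)" if "\<omega> \<in> space M" for \<omega>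
    using sq_pointwise[of "t N j \<omega>" "real N"] pos[OF assms that] assms by auto
  show i: "integrable M (\<lambda>\<omega>. (t N j \<omega>)\<^sup>2)"
    by (rule Bochner_Integration.integrable_bound[OF ib]) (use pw in \<open>auto intro!: AE_I2 simp: abs_le_iff\<close>)
  have "(\<integral>\<omega>. (t N j \<omega>)\<^sup>2 \<partial>M) \<le> (\<integral>\<omega>. 1 / (real N)\<^sup>2 + real N powr r * t N j \<omega> powr (2 + r) \<partial>M)"
    by (intro integral_mono i ib) (use pw in auto)
  also have "\<dots> = 1 / (real N)\<^sup>2 + real N powr r * (\<integral>\<omega>. t N j \<omega> powr (2 + r) \<partial>M)"
    using mom_int[OF assms] by (simp add: prob_space)
  also have "\<dots> \<le> 1 / (real N)\<^sup>2 + real N powr r * (C / real N powr (2 + r))"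
    using mom[OF assms] by (intro add_left_mono mult_left_mono) auto
  also have "real N powr r * (C / real N powr (2 + r)) = C / (real N)\<^sup>2"
    using assms by (simp add: powr_add powr_numeral field_simps)
  finally show "(\<integral>\<omega>. (t N j \<omega>)\<^sup>2 \<partial>M) \<le> K / (real N)\<^sup>2" by (simp add: K_def add_divide_distrib)
qed

lemma exp_neg_quad:
  fixes z :: real assumes "z \<ge> 0"
  shows "exp (- z) \<le> 1 - z + z\<^sup>2 / 2"
proof -
  have a: "1 + z + z\<^sup>2 / 2 \<le> exp z" by (rule exp_lower_Taylor_quadratic[OF assms])
  have "(1 + z + z\<^sup>2 / 2) * (1 - z + z\<^sup>2 / 2) = 1 + z^4/4" by (simp add: algebra_simps power2_eq_square power4_eq_xxxx)
  also have "\<dots> \<ge> 1" by simp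
  finally have b: "1 \<le> (1 + z + z\<^sup>2 / 2) * (1 - z + z\<^sup>2 / 2)" .
  have p: "1 + z + z\<^sup>2 / 2 > 0" using assms by (simp add: add_pos_nonneg)
  have c: "1 - z + z\<^sup>2 / 2 > 0" using b p by (smt (verit) mult_nonneg_nonpos)
  have "exp (- z) = 1 / exp z" by (simp add: exp_minus field_simps)
  also have "\<dots> \<le> 1 / (1 + z + z\<^sup>2 / 2)" using a p by (intro divide_left_mono) auto
  also have "\<dots> \<le> 1 - z + z\<^sup>2 / 2" using b p by (simp add: field_simps)
  finally show ?thesis .
qed

lemma lower_mgf:
  assumes N: "1 \<le> N" and mu: "\<mu> \<ge> 0"
  shows "(\<integral>\<omega>. exp (- \<mu> * (\<Sum>j\<in>{1..n}. t N j \<omega>)) \<partial>M)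
           \<le> exp (real n * (- \<mu> / real N + \<mu>\<^sup>2 * K / (2 * (real N)\<^sup>2)))"
proof -
  have "(\<integral>\<omega>. exp (- \<mu> * (\<Sum>j\<in>{1..n}. t N j \<omega>)) \<partial>M)
        = (\<integral>\<omega>. exp (- \<mu> * (\<Sum>j\<in>{1..n}. max 0 (t N j \<omega>))) \<partial>M)"
  proof (rule Bochner_Integration.integral_cong[OF refl])
    fix \<omega> assume w: "\<omega> \<in> space M"
    have "(\<Sum>j\<in>{1..n}. max 0 (t N j \<omega>)) = (\<Sum>j\<in>{1..n}. t N j \<omega>)"
      by (intro sum.cong refl) (use pos[OF N _ w] in \<open>force simp: max_def\<close>)
    then show "exp (- \<mu> * (\<Sum>j\<in>{1..n}. t N j \<omega>)) = exp (- \<mu> * (\<Sum>j\<in>{1..n}. max 0 (t N j \<omega>)))"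
      by simp
  qed
  also have "\<dots> \<le> (\<Prod>j\<in>{1..n}. \<integral>\<omega>. exp (- \<mu> * max 0 (t N j \<omega>)) \<partial>M)"
    by (rule nsd_exp[OF nsd[OF N], where B=0]) (use N mu in \<open>auto intro: rv simp: mono_def mult_nonneg_nonneg\<close>)
  also have "\<dots> \<le> (\<Prod>j\<in>{1..n}. exp (- \<mu> / real N + \<mu>\<^sup>2 * K / (2 * (real N)\<^sup>2)))"
  proof (rule prod_mono, safe)
    fix j assume j: "j \<in> {1..n}"
    then have j1: "1 \<le> j" by simp
    have m[measurable]: "t N j \<in> borel_measurable M" by (rule rv[OF N j1])
    show "0 \<le> (\<integral>\<omega>. exp (- \<mu> * max 0 (t N j \<omega>)) \<partial>M)" by simp
    have ie: "integrable M (\<lambda>\<omega>. exp (- \<mu> * t N j \<omega>))"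
      by (rule integrable_const_bound[where B=1])
         (use pos[OF N j1] mu in \<open>auto intro!: AE_I2 simp: mult_nonneg_nonneg less_imp_le\<close>)
    have iq: "integrable M (\<lambda>\<omega>. 1 - \<mu> * t N j \<omega> + \<mu>\<^sup>2 * (t N j \<omega>)\<^sup>2 / 2)"
      using mean_int[OF N j1] sq_int(1)[OF N j1] by auto
    have "(\<integral>\<omega>. exp (- \<mu> * max 0 (t N j \<omega>)) \<partial>M) = (\<integral>\<omega>. exp (- \<mu> * t N j \<omega>) \<partial>M)"
      by (rule Bochner_Integration.integral_cong[OF refl]) (use pos[OF N j1] in \<open>force simp: max_def\<close>)
    also have "\<dots> \<le> (\<integral>\<omega>. 1 - \<mu> * t N j \<omega> + \<mu>\<^sup>2 * (t N j \<omega>)\<^sup>2 / 2 \<partial>M)"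
    proof (intro integral_mono ie iq)
      fix \<omega> assume "\<omega> \<in> space M"
      then have "0 \<le> \<mu> * t N j \<omega>" using pos[OF N j1] mu by (simp add: less_imp_le)
      from exp_neg_quad[OF this] show "exp (- \<mu> * t N j \<omega>) \<le> 1 - \<mu> * t N j \<omega> + \<mu>\<^sup>2 * (t N j \<omega>)\<^sup>2 / 2"
        by (simp add: power_mult_distrib)
    qed
    also have "\<dots> = 1 - \<mu> * (1 / real N) + \<mu>\<^sup>2 / 2 * (\<integral>\<omega>. (t N j \<omega>)\<^sup>2 \<partial>M)"
      using mean_int[OF N j1] sq_int(1)[OF N j1] mean[OF N j1] by (simp add: prob_space)
    also have "\<dots> \<le> 1 - \<mu> * (1 / real N) + \<mu>\<^sup>2 / 2 * (K / (real N)\<^sup>2)"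
      using sq_int(2)[OF N j1] by (intro add_left_mono mult_left_mono) auto
    also have "\<dots> = 1 + (- \<mu> / real N + \<mu>\<^sup>2 * K / (2 * (real N)\<^sup>2))" by simp
    also have "\<dots> \<le> exp (- \<mu> / real N + \<mu>\<^sup>2 * K / (2 * (real N)\<^sup>2))"
      by (rule exp_ge_add_one_self)
    finally show "(\<integral>\<omega>. exp (- \<mu> * max 0 (t N j \<omega>)) \<partial>M) \<le> exp (- \<mu> / real N + \<mu>\<^sup>2 * K / (2 * (real N)\<^sup>2))" .
  qed
  also have "\<dots> = exp (real n * (- \<mu> / real N + \<mu>\<^sup>2 * K / (2 * (real N)\<^sup>2)))"
    by (simp add: exp_of_nat_mult)
  finally show ?thesis .
qed

lemma upper_mgf:
  assumes N: "1 \<le> N" and l: "l \<ge> 0" and ld: "l * \<delta> \<le> 1" and d: "\<delta> \<ge> 0"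
  shows "(\<integral>\<omega>. exp (l * (\<Sum>j\<in>{1..n}. max 0 (min (t N j \<omega>) \<delta>))) \<partial>M)
           \<le> exp (real n * (l / real N + l\<^sup>2 * K / (real N)\<^sup>2))"
proof -
  have "(\<integral>\<omega>. exp (l * (\<Sum>j\<in>{1..n}. max 0 (min (t N j \<omega>) \<delta>))) \<partial>M)
     \<le> (\<Prod>j\<in>{1..n}. \<integral>\<omega>. exp (l * max 0 (min (t N j \<omega>) \<delta>)) \<partial>M)"
  proof (rule nsd_exp[OF nsd[OF N], where B=1])
    show "l * max 0 (min x \<delta>) \<le> 1" for x
    proof -
      have "l * max 0 (min x \<delta>) \<le> l * \<delta>" using l d by (intro mult_left_mono) auto
      then show ?thesis using ld by simp
    qed
  qed (use N in \<open>auto intro: rv simp: mono_def\<close>)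
  also have "\<dots> \<le> (\<Prod>j\<in>{1..n}. exp (l / real N + l\<^sup>2 * K / (real N)\<^sup>2))"
  proof (rule prod_mono, safe)
    fix j assume j: "j \<in> {1..n}"
    then have j1: "1 \<le> j" by simp
    have m[measurable]: "t N j \<in> borel_measurable M" by (rule rv[OF N j1])
    show "0 \<le> (\<integral>\<omega>. exp (l * max 0 (min (t N j \<omega>) \<delta>)) \<partial>M)" by simp
    have ie: "integrable M (\<lambda>\<omega>. exp (l * max 0 (min (t N j \<omega>) \<delta>)))"
      by (rule integrable_const_bound[where B="exp 1"])
         (use l ld d in \<open>auto intro!: AE_I2 simp: max_def min_def mult_left_mono
               intro: order_trans[OF mult_left_mono[of _ \<delta> l]]\<close>)
    have iq: "integrable M (\<lambda>\<omega>. 1 + l * t N j \<omega> + l\<^sup>2 * (t N j \<omega>)\<^sup>2)"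
      using mean_int[OF N j1] sq_int(1)[OF N j1] by auto
    have "(\<integral>\<omega>. exp (l * max 0 (min (t N j \<omega>) \<delta>)) \<partial>M) \<le> (\<integral>\<omega>. 1 + l * t N j \<omega> + l\<^sup>2 * (t N j \<omega>)\<^sup>2 \<partial>M)"
    proof (intro integral_mono ie iq)
      fix \<omega> assume w: "\<omega> \<in> space M"
      define y where "y = max 0 (min (t N j \<omega>) \<delta>)"
      have y0: "0 \<le> y" and yt: "y \<le> t N j \<omega>" and yd: "y \<le> \<delta>"
        using pos[OF N j1 w] d by (auto simp: y_def)
      have ly0: "0 \<le> l * y" using l y0 by simp
      have ly1: "l * y \<le> 1" using ld mult_left_mono[OF yd l] by simp
      have "exp (l * y) \<le> 1 + l * y + (l * y)\<^sup>2" by (rule exp_bound[OF ly0 ly1])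
      also have "\<dots> \<le> 1 + l * t N j \<omega> + l\<^sup>2 * (t N j \<omega>)\<^sup>2"
      proof -
        have "l * y \<le> l * t N j \<omega>" using yt l by (rule mult_left_mono)
        moreover have "y\<^sup>2 \<le> (t N j \<omega>)\<^sup>2" using yt y0 by (rule power_mono)
        then have "l\<^sup>2 * y\<^sup>2 \<le> l\<^sup>2 * (t N j \<omega>)\<^sup>2" by (rule mult_left_mono) simp
        ultimately show ?thesis by (simp add: power_mult_distrib)
      qed
      finally show "exp (l * max 0 (min (t N j \<omega>) \<delta>)) \<le> 1 + l * t N j \<omega> + l\<^sup>2 * (t N j \<omega>)\<^sup>2"
        by (simp add: y_def)
    qed
    also have "\<dots> = 1 + l * (1 / real N) + l\<^sup>2 * (\<integral>\<omega>. (t N j \<omega>)\<^sup>2 \<partial>M)"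
      using mean_int[OF N j1] sq_int(1)[OF N j1] mean[OF N j1] by (simp add: prob_space)
    also have "\<dots> \<le> 1 + l * (1 / real N) + l\<^sup>2 * (K / (real N)\<^sup>2)"
      using sq_int(2)[OF N j1] by (intro add_left_mono mult_left_mono) auto
    also have "\<dots> = 1 + (l / real N + l\<^sup>2 * K / (real N)\<^sup>2)" by simp
    also have "\<dots> \<le> exp (l / real N + l\<^sup>2 * K / (real N)\<^sup>2)"
      by (rule exp_ge_add_one_self)
    finally show "(\<integral>\<omega>. exp (l * max 0 (min (t N j \<omega>) \<delta>)) \<partial>M) \<le> exp (l / real N + l\<^sup>2 * K / (real N)\<^sup>2)" .
  qed
  also have "\<dots> = exp (real n * (l / real N + l\<^sup>2 * K / (real N)\<^sup>2))"
    by (simp add: exp_of_nat_mult)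
  finally show ?thesis .
qed

definition "aa = r / (4 + 2 * r)"

lemma aa_pos: "aa > 0" using r_pos by (simp add: aa_def)
lemma aa_half: "2 * aa \<le> 1" using r_pos by (simp add: aa_def field_simps)
lemma aa_r: "aa * (2 + r) = r / 2" using r_pos by (simp add: aa_def field_simps)
lemma K_pos: "K > 0" using C_pos by (simp add: K_def)

lemma mu_sq: assumes "1 \<le> N" shows "(real N powr aa)\<^sup>2 \<le> real N"
proof -
  have "(real N powr aa)\<^sup>2 = real N powr (2 * aa)"
    by (simp add: powr_realpow[symmetric] powr_powr mult.commute flip: powr_powr)
  also have "\<dots> \<le> real N powr 1" using assms aa_half by (intro powr_mono) auto
  finally show ?thesis using assms by simp
qed

lemma sum_meas: "1 \<le> N \<Longrightarrow> (\<lambda>\<omega>. \<Sum>j\<in>{1..n}. t N j \<omega>) \<in> borel_measurable M"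
  by (intro borel_measurable_sum rv) auto

lemma sumc_meas: "1 \<le> N \<Longrightarrow> (\<lambda>\<omega>. \<Sum>j\<in>{1..n}. max 0 (min (t N j \<omega>) \<delta>)) \<in> borel_measurable M"
  by (intro borel_measurable_sum borel_measurable_max borel_measurable_min rv) auto

lemma lower_tail:
  assumes N: "1 \<le> N" and n: "n \<le> 3 * N" and e: "\<epsilon> > 0"
  shows "prob {\<omega>\<in>space M. (\<Sum>j\<in>{1..n}. t N j \<omega>) \<le> real n / real N - \<epsilon>}
           \<le> exp (3 * K) * exp (- \<epsilon> * real N powr aa)"
proof -
  define \<mu> where "\<mu> = real N powr aa"
  have mu: "\<mu> > 0" using N by (simp add: \<mu>_def)
  define c where "c = real n / real N - \<epsilon>"
  have [measurable]: "(\<lambda>\<omega>. \<Sum>j\<in>{1..n}. t N j \<omega>) \<in> borel_measurable M" by (rule sum_meas[OF N])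
  have "{\<omega>\<in>space M. (\<Sum>j\<in>{1..n}. t N j \<omega>) \<le> c}
      = {\<omega>\<in>space M. exp (- \<mu> * (\<Sum>j\<in>{1..n}. t N j \<omega>)) \<ge> exp (- \<mu> * c)}"
    using mu by auto
  then have "prob {\<omega>\<in>space M. (\<Sum>j\<in>{1..n}. t N j \<omega>) \<le> c}
       \<le> (\<integral>\<omega>. exp (- \<mu> * (\<Sum>j\<in>{1..n}. t N j \<omega>)) \<partial>M) / exp (- \<mu> * c)"
  proof (simp only:, intro integral_Markov_inequality_measure[where A="space M"])
    show "integrable M (\<lambda>\<omega>. exp (- \<mu> * (\<Sum>j\<in>{1..n}. t N j \<omega>)))"
    proof (rule integrable_const_bound[where B=1])
      show "AE x in M. norm (exp (- \<mu> * (\<Sum>j\<in>{1..n}. t N j x))) \<le> 1"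
      proof (rule AE_I2)
        fix x assume x: "x \<in> space M"
        have "0 \<le> (\<Sum>j\<in>{1..n}. t N j x)" by (intro sum_nonneg) (use pos[OF N _ x] in \<open>force\<close>)
        then show "norm (exp (- \<mu> * (\<Sum>j\<in>{1..n}. t N j x))) \<le> 1" using mu by simp
      qed
    qed measurable
  qed auto
  also have "\<dots> \<le> exp (real n * (- \<mu> / real N + \<mu>\<^sup>2 * K / (2 * (real N)\<^sup>2))) / exp (- \<mu> * c)"
    by (intro divide_right_mono lower_mgf N) (use mu in auto)
  also have "\<dots> = exp (real n * \<mu>\<^sup>2 * K / (2 * (real N)\<^sup>2) - \<mu> * \<epsilon>)"
    using N by (simp add: exp_diff[symmetric] c_def field_simps)
  also have "\<dots> \<le> exp (3 * K - \<epsilon> * real N powr aa)"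
  proof -
    have "real n * \<mu>\<^sup>2 * K / (2 * (real N)\<^sup>2) \<le> (3 * real N) * real N * K / (2 * (real N)\<^sup>2)"
      using n mu_sq[OF N] K_pos by (intro divide_right_mono mult_right_mono mult_mono) (auto simp: \<mu>_def)
    also have "\<dots> = 3 * K / 2" using N by (simp add: field_simps power2_eq_square)
    also have "\<dots> \<le> 3 * K" using K_pos by simp
    finally show ?thesis by (simp add: \<mu>_def mult.commute)
  qed
  finally show ?thesis by (simp add: c_def exp_diff exp_minus field_simps)
qed

lemma upper_tail:
  assumes N: "1 \<le> N" and n: "n \<le> 3 * N" and e: "\<epsilon> > 0"
  shows "prob {\<omega>\<in>space M. (\<Sum>j\<in>{1..n}. max 0 (min (t N j \<omega>) (real N powr (- aa)))) \<ge> real n / real N + \<epsilon>}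
           \<le> exp (3 * K) * exp (- \<epsilon> * real N powr aa)"
proof -
  define \<mu> where "\<mu> = real N powr aa"
  define \<delta> where "\<delta> = real N powr (- aa)"
  have mu: "\<mu> > 0" using N by (simp add: \<mu>_def)
  have md: "\<mu> * \<delta> = 1" using N by (simp add: \<mu>_def \<delta>_def powr_minus)
  have d: "\<delta> \<ge> 0" by (simp add: \<delta>_def)
  define c where "c = real n / real N + \<epsilon>"
  define S where "S = (\<lambda>\<omega>. \<Sum>j\<in>{1..n}. max 0 (min (t N j \<omega>) \<delta>))"
  have [measurable]: "S \<in> borel_measurable M" unfolding S_def by (rule sumc_meas[OF N])
  have "{\<omega>\<in>space M. S \<omega> \<ge> c} = {\<omega>\<in>space M. exp (\<mu> * S \<omega>) \<ge> exp (\<mu> * c)}"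
    using mu by auto
  then have "prob {\<omega>\<in>space M. S \<omega> \<ge> c} \<le> (\<integral>\<omega>. exp (\<mu> * S \<omega>) \<partial>M) / exp (\<mu> * c)"
  proof (simp only:, intro integral_Markov_inequality_measure[where A="space M"])
    show "integrable M (\<lambda>\<omega>. exp (\<mu> * S \<omega>))"
    proof (rule integrable_const_bound[where B="exp (real n)"])
      show "AE x in M. norm (exp (\<mu> * S x)) \<le> exp (real n)"
      proof (rule AE_I2)
        fix x assume x: "x \<in> space M"
        have "\<mu> * S x = (\<Sum>j\<in>{1..n}. \<mu> * max 0 (min (t N j x) \<delta>))" by (simp add: S_def sum_distrib_left)
        also have "\<dots> \<le> (\<Sum>j\<in>{1..n}. 1)"
        proof (intro sum_mono)
          fix j
          have "\<mu> * max 0 (min (t N j x) \<delta>) \<le> \<mu> * \<delta>" using mu d by (intro mult_left_mono) auto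
          then show "\<mu> * max 0 (min (t N j x) \<delta>) \<le> 1" using md by simp
        qed
        finally show "norm (exp (\<mu> * S x)) \<le> exp (real n)" by simp
      qed
    qed measurable
  qed auto
  also have "\<dots> \<le> exp (real n * (\<mu> / real N + \<mu>\<^sup>2 * K / (real N)\<^sup>2)) / exp (\<mu> * c)"
    unfolding S_def by (intro divide_right_mono upper_mgf N) (use mu md d in auto)
  also have "\<dots> = exp (real n * \<mu>\<^sup>2 * K / (real N)\<^sup>2 - \<mu> * \<epsilon>)"
    using N by (simp add: exp_diff[symmetric] c_def field_simps)
  also have "\<dots> \<le> exp (3 * K - \<epsilon> * real N powr aa)"
  proof -
    have "real n * \<mu>\<^sup>2 * K / (real N)\<^sup>2 \<le> (3 * real N) * real N * K / (real N)\<^sup>2"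
      using n mu_sq[OF N] K_pos by (intro divide_right_mono mult_right_mono mult_mono) (auto simp: \<mu>_def)
    also have "\<dots> = 3 * K" using N by (simp add: field_simps power2_eq_square)
    finally show ?thesis by (simp add: \<mu>_def mult.commute)
  qed
  finally show ?thesis by (simp add: S_def c_def \<delta>_def exp_diff exp_minus field_simps)
qed

lemma single_tail:
  assumes N: "1 \<le> N" and j: "1 \<le> j"
  shows "prob {\<omega>\<in>space M. t N j \<omega> > real N powr (- aa)} \<le> C * real N powr (- (2 + r / 2))"
proof -
  define \<delta> where "\<delta> = real N powr (- aa)"
  have d: "\<delta> > 0" using N by (simp add: \<delta>_def)
  have [measurable]: "t N j \<in> borel_measurable M" by (rule rv[OF N j])
  have [measurable]: "(\<lambda>\<omega>. t N j \<omega> powr (2 + r)) \<in> borel_measurable M" by measurable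
  have "prob {\<omega>\<in>space M. t N j \<omega> > \<delta>} \<le> prob {\<omega>\<in>space M. t N j \<omega> powr (2 + r) \<ge> \<delta> powr (2 + r)}"
  proof (rule finite_measure_mono)
    show "{\<omega> \<in> space M. \<delta> < t N j \<omega>} \<subseteq> {\<omega> \<in> space M. \<delta> powr (2 + r) \<le> t N j \<omega> powr (2 + r)}"
      using d r_pos by (auto intro: powr_mono2)
  qed measurable
  also have "\<dots> \<le> (\<integral>\<omega>. t N j \<omega> powr (2 + r) \<partial>M) / \<delta> powr (2 + r)"
    by (intro integral_Markov_inequality_measure[where A="space M"] mom_int N j) (use d in auto)
  also have "\<dots> \<le> (C / real N powr (2 + r)) / \<delta> powr (2 + r)"
    by (intro divide_right_mono mom N j) simp
  also have "\<delta> powr (2 + r) = real N powr (- (r / 2))"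
    unfolding \<delta>_def powr_powr using aa_r by (metis minus_mult_left)
  also have "(C / real N powr (2 + r)) / real N powr (- (r / 2)) = C * real N powr (- (2 + r / 2))"
    using N by (simp add: powr_minus powr_add[symmetric] field_simps flip: powr_diff)
      (rule disjI2, rule arg_cong[where f="\<lambda>x. real N powr x"], simp)
  finally show ?thesis by (simp add: \<delta>_def)
qed

lemma max_tail:
  assumes N: "1 \<le> N"
  shows "prob {\<omega>\<in>space M. \<exists>j\<in>{1..3*N}. t N j \<omega> > real N powr (- aa)} \<le> 3 * C * real N powr (- (1 + r / 2))"
proof -
  have "{\<omega>\<in>space M. \<exists>j\<in>{1..3*N}. t N j \<omega> > real N powr (- aa)}
      = (\<Union>j\<in>{1..3*N}. {\<omega>\<in>space M. t N j \<omega> > real N powr (- aa)})" by auto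
  also have "prob \<dots> \<le> (\<Sum>j\<in>{1..3*N}. prob {\<omega>\<in>space M. t N j \<omega> > real N powr (- aa)})"
  proof (rule measure_UNION_le)
    fix j assume "j \<in> {1..3*N}"
    then have [measurable]: "t N j \<in> borel_measurable M" using rv[OF N] by auto
    show "{\<omega>\<in>space M. t N j \<omega> > real N powr (- aa)} \<in> sets M" by measurable
  qed simp
  also have "\<dots> \<le> (\<Sum>j\<in>{1..3*N}. C * real N powr (- (2 + r / 2)))"
    by (intro sum_mono single_tail N) auto
  also have "\<dots> = 3 * C * (real N * real N powr (- (2 + r / 2)))" by simp
  also have "real N * real N powr (- (2 + r / 2)) = real N powr (- (1 + r / 2))"
    using N by (simp add: powr_add[symmetric] powr_mult_base)
  finally show ?thesis .
qed

lemma summable_expo: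
  fixes e a :: real assumes "e > 0" "a > 0"
  shows "summable (\<lambda>N::nat. exp (- e * real N powr a))"
proof (rule summable_comparison_test_bigo)
  show "summable (\<lambda>N::nat. norm (real N powr (-2)))" by (simp add: summable_real_powr_iff)
  show "(\<lambda>N::nat. exp (- e * real N powr a)) \<in> O(\<lambda>N. real N powr (-2))"
  using assms by real_asymp
qed

lemma BC:
  fixes P :: "nat \<Rightarrow> 'a \<Rightarrow> bool" and g :: "nat \<Rightarrow> real"
  assumes meas: "\<And>N. 1 \<le> N \<Longrightarrow> {\<omega>\<in>space M. P N \<omega>} \<in> sets M"
    and bnd: "\<And>N. 1 \<le> N \<Longrightarrow> prob {\<omega>\<in>space M. P N \<omega>} \<le> g N"
    and sg: "summable g"
  shows "AE \<omega> in M. eventually (\<lambda>N. \<not> P N \<omega>) sequentially"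
proof -
  define A where "A N = {\<omega>\<in>space M. 1 \<le> N \<and> P N \<omega>}" for N
  have As: "A N = (if 1 \<le> N then {\<omega>\<in>space M. P N \<omega>} else {})" for N
    by (auto simp: A_def)
  have Am: "A N \<in> sets M" for N using meas by (simp add: As)
  have "AE \<omega> in M. eventually (\<lambda>N. \<omega> \<in> space M - A N) sequentially"
  proof (rule borel_cantelli_AE1[OF Am])
    show "emeasure M (A n) < \<infinity>" for n by (simp add: less_top[symmetric])
    have g0: "g N \<ge> 0" if "1 \<le> N" for N using bnd[OF that] measure_nonneg order_trans by blast
    show "summable (\<lambda>n. measure M (A n))"
    proof (rule summable_comparison_test[OF _ sg])
      show "\<exists>N0. \<forall>n\<ge>N0. norm (measure M (A n)) \<le> g n"
        using bnd by (intro exI[of _ 1]) (auto simp: As)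
    qed
  qed
  then show ?thesis
  proof (rule AE_mp, intro AE_I2 impI)
    fix \<omega> assume "\<omega> \<in> space M" and ev: "eventually (\<lambda>N. \<omega> \<in> space M - A N) sequentially"
    show "eventually (\<lambda>N. \<not> P N \<omega>) sequentially"
      using eventually_conj[OF ev eventually_ge_at_top[of 1]] by (rule eventually_mono) (auto simp: A_def)
  qed
qed

end


context setting begin
lemma AE_lower:
  assumes f: "\<And>N. 1 \<le> N \<Longrightarrow> f N \<le> 3 * N" and e: "\<epsilon> > 0"
  shows "AE \<omega> in M. eventually (\<lambda>N. \<not> (\<Sum>j\<in>{1..f N}. t N j \<omega>) \<le> real (f N) / real N - \<epsilon>) sequentially"
proof (rule BC[where g="\<lambda>N. exp (3 * K) * exp (- \<epsilon> * real N powr aa)"])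
  fix N :: nat assume N: "1 \<le> N"
  have [measurable]: "(\<lambda>\<omega>. \<Sum>j\<in>{1..f N}. t N j \<omega>) \<in> borel_measurable M" by (rule sum_meas[OF N])
  show "{\<omega> \<in> space M. (\<Sum>j\<in>{1..f N}. t N j \<omega>) \<le> real (f N) / real N - \<epsilon>} \<in> sets M" by measurable
  show "prob {\<omega> \<in> space M. (\<Sum>j\<in>{1..f N}. t N j \<omega>) \<le> real (f N) / real N - \<epsilon>}
     \<le> exp (3 * K) * exp (- \<epsilon> * real N powr aa)" by (rule lower_tail[OF N f[OF N] e])
next
  show "summable (\<lambda>N. exp (3 * K) * exp (- \<epsilon> * real N powr aa))"
    by (rule summable_mult, rule summable_expo[OF e aa_pos])
qed

lemma set_ge: fixes f :: "'a \<Rightarrow> real" assumes "f \<in> borel_measurable M" shows "{\<omega>\<in>space M. c \<le> f \<omega>} \<in> sets M"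
proof -
  have "{\<omega>\<in>space M. c \<le> f \<omega>} = f -` {c..} \<inter> space M" by auto
  also have "\<dots> \<in> sets M" by (rule measurable_sets[OF assms]) (simp add: borel_closed)
  finally show ?thesis .
qed

lemma AE_upper:
  assumes f: "\<And>N. 1 \<le> N \<Longrightarrow> f N \<le> 3 * N" and e: "\<epsilon> > 0"
  shows "AE \<omega> in M. eventually (\<lambda>N. \<not> (\<Sum>j\<in>{1..f N}. max 0 (min (t N j \<omega>) (real N powr (- aa))))
             \<ge> real (f N) / real N + \<epsilon>) sequentially"
proof (rule BC[where g="\<lambda>N. exp (3 * K) * exp (- \<epsilon> * real N powr aa)"])
  fix N :: nat assume N: "1 \<le> N"
  show "{\<omega> \<in> space M. (\<Sum>j\<in>{1..f N}. max 0 (min (t N j \<omega>) (real N powr (- aa)))) \<ge> real (f N) / real N + \<epsilon>} \<in> sets M"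
    by (rule set_ge[OF sumc_meas[OF N]])
  show "prob {\<omega> \<in> space M. (\<Sum>j\<in>{1..f N}. max 0 (min (t N j \<omega>) (real N powr (- aa)))) \<ge> real (f N) / real N + \<epsilon>}
     \<le> exp (3 * K) * exp (- \<epsilon> * real N powr aa)" by (rule upper_tail[OF N f[OF N] e])
next
  show "summable (\<lambda>N. exp (3 * K) * exp (- \<epsilon> * real N powr aa))"
    by (rule summable_mult, rule summable_expo[OF e aa_pos])
qed

lemma AE_max:
  shows "AE \<omega> in M. eventually (\<lambda>N. \<not> (\<exists>j\<in>{1..3*N}. t N j \<omega> > real N powr (- aa))) sequentially"
proof (rule BC[where g="\<lambda>N. 3 * C * real N powr (- (1 + r / 2))"])
  fix N :: nat assume N: "1 \<le> N"
  have "{\<omega> \<in> space M. \<exists>j\<in>{1..3*N}. t N j \<omega> > real N powr (- aa)}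
      = (\<Union>j\<in>{1..3*N}. {\<omega>\<in>space M. t N j \<omega> > real N powr (- aa)})" by auto
  also have "\<dots> \<in> sets M"
  proof (intro sets.finite_UN)
    fix j assume "j \<in> {1..3*N}"
    then have [measurable]: "t N j \<in> borel_measurable M" using rv[OF N] by auto
    show "{\<omega>\<in>space M. t N j \<omega> > real N powr (- aa)} \<in> sets M" by measurable
  qed simp
  finally show "{\<omega> \<in> space M. \<exists>j\<in>{1..3*N}. t N j \<omega> > real N powr (- aa)} \<in> sets M" .
  show "prob {\<omega> \<in> space M. \<exists>j\<in>{1..3*N}. t N j \<omega> > real N powr (- aa)}
     \<le> 3 * C * real N powr (- (1 + r / 2))" by (rule max_tail[OF N])
next
  show "summable (\<lambda>N. 3 * C * real N powr (- (1 + r / 2)))"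
    using r_pos by (rule_tac summable_mult) (simp add: summable_real_powr_iff)
qed

end



lemma downclosed_card:
  fixes S :: "nat set"
  assumes fin: "finite S" and pos: "\<And>j. j \<in> S \<Longrightarrow> 1 \<le> j"
    and dc: "\<And>i j. j \<in> S \<Longrightarrow> 1 \<le> i \<Longrightarrow> i \<le> j \<Longrightarrow> i \<in> S"
  shows "S = {1..card S}"
proof (cases "S = {}")
  case True then show ?thesis by simp
next
  case False
  define m where "m = Max S"
  have "m \<in> S" using fin False by (simp add: m_def)
  have "S = {1..m}"
  proof
    show "S \<subseteq> {1..m}" using fin pos by (auto simp: m_def)
    show "{1..m} \<subseteq> S" using dc \<open>m \<in> S\<close> by auto
  qed
  then show ?thesis by simp
qed

definition eps :: "nat \<Rightarrow> real" where "eps k = 1 / (real k + 6)"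
definition f2 :: "nat \<Rightarrow> nat \<Rightarrow> nat" where "f2 k N = nat \<lfloor>(1 - 3 * eps k) * real N\<rfloor>"
definition f3 :: "nat \<Rightarrow> nat \<Rightarrow> nat" where "f3 k N = nat \<lceil>(1 + 3 * eps k) * real N\<rceil>"

lemma eps_pos: "eps k > 0" and eps_le: "eps k \<le> 1/6" by (auto simp: eps_def field_simps)

lemma f2_props: "f2 k N \<le> N" "real (f2 k N) \<ge> (1 - 3 * eps k) * real N - 1"
proof -
  have x0: "(1 - 3 * eps k) * real N \<ge> 0" using eps_le[of k] by simp
  have "real_of_int \<lfloor>(1 - 3 * eps k) * real N\<rfloor> \<le> (1 - 3 * eps k) * real N" by simp
  also have "\<dots> \<le> real N"
  proof -
    have "(1 - 3 * eps k) * real N = real N - 3 * eps k * real N" by (simp add: algebra_simps)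
    moreover have "0 \<le> 3 * eps k * real N" using eps_pos[of k] by simp
    ultimately show ?thesis by linarith
  qed
  finally show "f2 k N \<le> N" unfolding f2_def by linarith
  show "real (f2 k N) \<ge> (1 - 3 * eps k) * real N - 1" unfolding f2_def
    using x0 by linarith
qed

lemma f3_props: assumes "1 \<le> N" shows "f3 k N \<le> 3 * N" "1 \<le> f3 k N" "real (f3 k N) \<le> (1 + 3 * eps k) * real N + 1"
proof -
  have x1: "(1 + 3 * eps k) * real N \<le> 3 * real N" using eps_le[of k] by (intro mult_right_mono) auto
  have x2: "(1 + 3 * eps k) * real N \<ge> 1"
  proof -
    have "(1 + 3 * eps k) * real N = real N + 3 * eps k * real N" by (simp add: algebra_simps)
    moreover have "0 \<le> 3 * eps k * real N" using eps_pos[of k] by simp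
    moreover have "real N \<ge> 1" using assms by simp
    ultimately show ?thesis by linarith
  qed
  show "f3 k N \<le> 3 * N" unfolding f3_def using x1 by (simp add: ceiling_le_iff nat_le_iff)
  show "1 \<le> f3 k N" unfolding f3_def using x2 by linarith
  show "real (f3 k N) \<le> (1 + 3 * eps k) * real N + 1" unfolding f3_def using x2 by linarith
qed


lemma eps_small: assumes "e > 0" shows "\<exists>k. eps k < e"
proof
  define k where "k = nat \<lceil>1 / e\<rceil>"
  have "1 / e < real k + 6" unfolding k_def by linarith
  then have "1 < (real k + 6) * e" using assms by (simp add: field_simps)
  then show "eps (nat \<lceil>1 / e\<rceil>) < e" using assms by (simp add: eps_def k_def[symmetric] field_simps)
qed

lemma determ_N:
  fixes t :: "nat \<Rightarrow> nat \<Rightarrow> 'a \<Rightarrow> real"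
  assumes N: "1 \<le> N" and pos: "\<And>j. 1 \<le> j \<Longrightarrow> t N j \<omega> > 0"
    and mx: "\<forall>j\<in>{1..3*N}. t N j \<omega> \<le> d"
    and h1: "\<bar>tau (t N) N \<omega> - 1\<bar> \<le> eps k" and h2: "tau (t N) (f2 k N) \<omega> < 1"
    and h3: "tau (t N) (f3 k N) \<omega> > 1"
  shows "finite (count_set (t N) \<omega>)
     \<and> \<bar>real (card (count_set (t N) \<omega>)) / real N - 1\<bar> \<le> 3 * eps k + 1 / real N
     \<and> \<bar>tau (t N) (card (count_set (t N) \<omega>)) \<omega> - tau (t N) N \<omega>\<bar> \<le> d + eps k"
proof -
  let ?T = "\<lambda>i. tau (t N) i \<omega>"
  have mono: "?T i \<le> ?T i'" if "i \<le> i'" for i i'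
  proof -
    have nn: "0 \<le> t N j \<omega>" if "\<not> j \<le> i" for j using pos[of j] that by simp
    show ?thesis unfolding tau_def using that by (intro sum_mono2) (auto intro: nn)
  qed
  define S where "S = count_set (t N) \<omega>"
  have S_iff: "j \<in> S \<longleftrightarrow> 1 \<le> j \<and> ?T j \<le> 1" for j by (simp add: S_def count_set_def)
  have Ssub: "S \<subseteq> {1..<f3 k N}"
  proof
    fix j assume j: "j \<in> S"
    have "\<not> f3 k N \<le> j"
    proof
      assume "f3 k N \<le> j"
      then have "?T (f3 k N) \<le> ?T j" by (rule mono)
      then show False using j h3 by (auto simp: S_iff)
    qed
    then show "j \<in> {1..<f3 k N}" using j by (auto simp: S_iff)
  qed
  have fin: "finite S" using Ssub finite_subset by blast
  have Seq: "S = {1..card S}"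
  proof (rule downclosed_card[OF fin])
    show "1 \<le> j" if "j \<in> S" for j using that by (simp add: S_iff)
    show "i \<in> S" if "j \<in> S" "1 \<le> i" "i \<le> j" for i j
      using that mono[of i j] by (auto simp: S_iff)
  qed
  define c where "c = card S"
  have Sc: "S = {1..c}" unfolding c_def by (rule Seq)
  have f31: "1 \<le> f3 k N" "f3 k N \<le> 3 * N" using f3_props[OF N] by auto
  have cf3: "c < f3 k N"
  proof (rule ccontr)
    assume "\<not> c < f3 k N"
    then have "f3 k N \<in> S" using f31 by (simp add: Sc)
    then show False using h3 by (simp add: S_iff)
  qed
  have f2c: "f2 k N \<le> c"
  proof (cases "f2 k N = 0")
    case False
    then have "f2 k N \<in> S" using h2 by (simp add: S_iff)
    then show ?thesis by (simp add: Sc)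
  qed simp
  have Tc: "?T c \<le> 1"
  proof (cases "c = 0")
    case True then show ?thesis by (simp add: tau_def)
  next
    case False
    then have "c \<in> S" by (simp add: Sc)
    then show ?thesis by (simp add: S_iff)
  qed
  have Tc1: "?T (Suc c) > 1"
  proof -
    have "Suc c \<notin> S" by (simp add: Sc)
    then show ?thesis by (simp add: S_iff not_le)
  qed
  have "?T (Suc c) = ?T c + t N (Suc c) \<omega>" by (simp add: tau_def)
  moreover have "t N (Suc c) \<omega> \<le> d" using mx cf3 f31 by auto
  ultimately have Tcl: "?T c > 1 - d" using Tc1 by linarith
  have p3: "\<bar>?T c - ?T N\<bar> \<le> d + eps k" using Tc Tcl h1 by linarith
  have rN: "real N \<ge> 1" using N by simp
  have lo: "real c \<ge> (1 - 3 * eps k) * real N - 1" using f2_props(2)[of k N] f2c by linarith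
  have hi: "real c \<le> (1 + 3 * eps k) * real N" using f3_props(3)[OF N, of k] cf3 by linarith
  have q1: "real c / real N \<ge> 1 - 3 * eps k - 1 / real N"
  proof -
    have "((1 - 3 * eps k) * real N - 1) / real N \<le> real c / real N"
      using lo rN by (intro divide_right_mono) auto
    moreover have "((1 - 3 * eps k) * real N - 1) / real N = 1 - 3 * eps k - 1 / real N"
      using rN by (simp add: field_simps)
    ultimately show ?thesis by simp
  qed
  have q2: "real c / real N \<le> 1 + 3 * eps k"
  proof -
    have "real c / real N \<le> ((1 + 3 * eps k) * real N) / real N"
      using hi rN by (intro divide_right_mono) auto
    then show ?thesis using rN by simp
  qed
  have p2: "\<bar>real c / real N - 1\<bar> \<le> 3 * eps k + 1 / real N"
  proof -
    have "0 \<le> 1 / real N" by simp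
    then show ?thesis using q1 q2 unfolding abs_le_iff by linarith
  qed
  show ?thesis using fin p2 p3 by (simp add: S_def c_def)
qed




lemma determ:
  fixes t :: "nat \<Rightarrow> nat \<Rightarrow> 'a \<Rightarrow> real" and \<delta> :: "nat \<Rightarrow> real"
  assumes pos: "\<And>N j. 1 \<le> N \<Longrightarrow> 1 \<le> j \<Longrightarrow> t N j \<omega> > 0"
    and d: "\<delta> \<longlonglongrightarrow> 0"
    and Hmax: "eventually (\<lambda>N. \<forall>j\<in>{1..3*N}. t N j \<omega> \<le> \<delta> N) sequentially"
    and Hk: "\<And>k. eventually (\<lambda>N. \<bar>tau (t N) N \<omega> - 1\<bar> \<le> eps k \<and> tau (t N) (f2 k N) \<omega> < 1
                 \<and> tau (t N) (f3 k N) \<omega> > 1) sequentially"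
  shows "(\<forall>\<^sub>F N in sequentially. finite (count_set (t N) \<omega>))
         \<and> ((\<lambda>N. real (card (count_set (t N) \<omega>)) / real N) \<longlonglongrightarrow> 1)
         \<and> ((\<lambda>N. \<bar>tau (t N) (card (count_set (t N) \<omega>)) \<omega> - tau (t N) N \<omega>\<bar>) \<longlonglongrightarrow> 0)"
proof -
  have key: "eventually (\<lambda>N. finite (count_set (t N) \<omega>)
     \<and> \<bar>real (card (count_set (t N) \<omega>)) / real N - 1\<bar> \<le> 3 * eps k + 1 / real N
     \<and> \<bar>tau (t N) (card (count_set (t N) \<omega>)) \<omega> - tau (t N) N \<omega>\<bar> \<le> \<delta> N + eps k) sequentially" for k
    using eventually_conj[OF eventually_ge_at_top[of 1] eventually_conj[OF Hmax Hk[of k]]]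
  proof (rule eventually_mono)
    fix N :: nat assume H: "1 \<le> N \<and> (\<forall>j\<in>{1..3*N}. t N j \<omega> \<le> \<delta> N) \<and> \<bar>tau (t N) N \<omega> - 1\<bar> \<le> eps k
       \<and> tau (t N) (f2 k N) \<omega> < 1 \<and> tau (t N) (f3 k N) \<omega> > 1"
    show "finite (count_set (t N) \<omega>)
     \<and> \<bar>real (card (count_set (t N) \<omega>)) / real N - 1\<bar> \<le> 3 * eps k + 1 / real N
     \<and> \<bar>tau (t N) (card (count_set (t N) \<omega>)) \<omega> - tau (t N) N \<omega>\<bar> \<le> \<delta> N + eps k"
      by (rule determ_N) (use H pos in auto)
  qed
  have a: "\<forall>\<^sub>F N in sequentially. finite (count_set (t N) \<omega>)"
    using key[of 0] by (rule eventually_mono) simp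
  have b: "(\<lambda>N. real (card (count_set (t N) \<omega>)) / real N) \<longlonglongrightarrow> 1"
  proof (rule tendstoI)
    fix e :: real assume e: "e > 0"
    obtain k where k: "eps k < e / 6" using eps_small[of "e/6"] e by auto
    have ev: "eventually (\<lambda>N. 1 / real N < e / 2) sequentially"
      using order_tendstoD(2)[OF lim_1_over_n, of "e/2"] e by simp
    show "eventually (\<lambda>N. dist (real (card (count_set (t N) \<omega>)) / real N) 1 < e) sequentially"
      using eventually_conj[OF key[of k] ev] by (rule eventually_mono) (use k in \<open>auto simp: dist_real_def\<close>)
  qed
  have c: "(\<lambda>N. \<bar>tau (t N) (card (count_set (t N) \<omega>)) \<omega> - tau (t N) N \<omega>\<bar>) \<longlonglongrightarrow> 0"
  proof (rule tendstoI)
    fix e :: real assume e: "e > 0"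
    obtain k where k: "eps k < e / 2" using eps_small[of "e/2"] e by auto
    have ev: "eventually (\<lambda>N. \<delta> N < e / 2) sequentially"
      using order_tendstoD(2)[OF d, of "e/2"] e by simp
    show "eventually (\<lambda>N. dist \<bar>tau (t N) (card (count_set (t N) \<omega>)) \<omega> - tau (t N) N \<omega>\<bar> 0 < e) sequentially"
      using eventually_conj[OF key[of k] ev] by (rule eventually_mono) (use k in \<open>auto simp: dist_real_def\<close>)
  qed
  show ?thesis using a b c by blast
qed


lemma f2_le: "real (f2 k N) \<le> (1 - 3 * eps k) * real N"
proof -
  have x0: "(1 - 3 * eps k) * real N \<ge> 0" using eps_le[of k] by simp
  then show ?thesis unfolding f2_def by linarith
qed

lemma f3_ge: "real (f3 k N) \<ge> (1 + 3 * eps k) * real N"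
  unfolding f3_def by linarith

context setting begin

lemma clamp_sum:
  assumes N: "1 \<le> N" and n: "n \<le> 3 * N" and w: "\<omega> \<in> space M"
    and mx: "\<forall>j\<in>{1..3*N}. t N j \<omega> \<le> real N powr (- aa)"
  shows "(\<Sum>j\<in>{1..n}. max 0 (min (t N j \<omega>) (real N powr (- aa)))) = tau (t N) n \<omega>"
  unfolding tau_def
proof (rule sum.cong[OF refl])
  fix j assume j: "j \<in> {1..n}"
  then have "t N j \<omega> > 0" "t N j \<omega> \<le> real N powr (- aa)" using pos[OF N _ w] mx n by auto
  then show "max 0 (min (t N j \<omega>) (real N powr (- aa))) = t N j \<omega>" by simp
qed

lemma main:
  "AE \<omega> in M.
           (\<forall>\<^sub>F N in sequentially. finite (count_set (t N) \<omega>))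
         \<and> ((\<lambda>N. real (card (count_set (t N) \<omega>)) / real N) \<longlonglongrightarrow> 1)
         \<and> ((\<lambda>N. \<bar>tau (t N) (card (count_set (t N) \<omega>)) \<omega> - tau (t N) N \<omega>\<bar>) \<longlonglongrightarrow> 0)"
proof -
  let ?c = "\<lambda>N j \<omega>. max 0 (min (t N j \<omega>) (real N powr (- aa)))"
  have AEk: "AE \<omega> in M. \<forall>k.
      eventually (\<lambda>N. \<not> (\<Sum>j\<in>{1..id N}. t N j \<omega>) \<le> real (id N) / real N - eps k) sequentially
    \<and> eventually (\<lambda>N. \<not> (\<Sum>j\<in>{1..id N}. ?c N j \<omega>) \<ge> real (id N) / real N + eps k) sequentially
    \<and> eventually (\<lambda>N. \<not> (\<Sum>j\<in>{1..f2 k N}. ?c N j \<omega>) \<ge> real (f2 k N) / real N + eps k) sequentially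
    \<and> eventually (\<lambda>N. \<not> (\<Sum>j\<in>{1..f3 k N}. t N j \<omega>) \<le> real (f3 k N) / real N - eps k) sequentially"
    unfolding AE_all_countable
  proof
    fix k
    have f2b: "f2 k N \<le> 3 * N" for N using f2_props(1)[of k N] by simp
    show "AE \<omega> in M.
      eventually (\<lambda>N. \<not> (\<Sum>j\<in>{1..id N}. t N j \<omega>) \<le> real (id N) / real N - eps k) sequentially
    \<and> eventually (\<lambda>N. \<not> (\<Sum>j\<in>{1..id N}. ?c N j \<omega>) \<ge> real (id N) / real N + eps k) sequentially
    \<and> eventually (\<lambda>N. \<not> (\<Sum>j\<in>{1..f2 k N}. ?c N j \<omega>) \<ge> real (f2 k N) / real N + eps k) sequentially
    \<and> eventually (\<lambda>N. \<not> (\<Sum>j\<in>{1..f3 k N}. t N j \<omega>) \<le> real (f3 k N) / real N - eps k) sequentially"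
      using AE_lower[of id, OF _ eps_pos[of k]] AE_upper[of id, OF _ eps_pos[of k]]
        AE_upper[of "f2 k", OF f2b eps_pos[of k]] AE_lower[of "f3 k", OF f3_props(1) eps_pos[of k]]
      by (auto elim!: AE_mp intro!: AE_I2)
  qed
  have d: "(\<lambda>N. real N powr (- aa)) \<longlonglongrightarrow> 0"
    by (rule tendsto_neg_powr) (use aa_pos filterlim_real_sequentially in auto)
  show ?thesis
    using AEk AE_max AE_space
  proof (eventually_elim)
    case (elim \<omega>)
    then have w: "\<omega> \<in> space M" and H: "\<And>k.
      eventually (\<lambda>N. \<not> (\<Sum>j\<in>{1..id N}. t N j \<omega>) \<le> real (id N) / real N - eps k) sequentially
    \<and> eventually (\<lambda>N. \<not> (\<Sum>j\<in>{1..id N}. ?c N j \<omega>) \<ge> real (id N) / real N + eps k) sequentially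
    \<and> eventually (\<lambda>N. \<not> (\<Sum>j\<in>{1..f2 k N}. ?c N j \<omega>) \<ge> real (f2 k N) / real N + eps k) sequentially
    \<and> eventually (\<lambda>N. \<not> (\<Sum>j\<in>{1..f3 k N}. t N j \<omega>) \<le> real (f3 k N) / real N - eps k) sequentially"
      and Hm: "eventually (\<lambda>N. \<not> (\<exists>j\<in>{1..3*N}. t N j \<omega> > real N powr (- aa))) sequentially"
      by auto
    have Hmax: "eventually (\<lambda>N. \<forall>j\<in>{1..3*N}. t N j \<omega> \<le> real N powr (- aa)) sequentially"
      using Hm by (rule eventually_mono) (auto simp: not_less)
    show ?case
    proof (rule determ[where t=t and \<omega>=\<omega> and \<delta>="\<lambda>N. real N powr (- aa)", OF _ d Hmax])
      show "\<And>N j. 1 \<le> N \<Longrightarrow> 1 \<le> j \<Longrightarrow> 0 < t N j \<omega>" using pos w by auto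
    next
      fix k
      have H1: "eventually (\<lambda>N. \<not> (\<Sum>j\<in>{1..id N}. t N j \<omega>) \<le> real (id N) / real N - eps k) sequentially"
        and H2: "eventually (\<lambda>N. \<not> (\<Sum>j\<in>{1..id N}. ?c N j \<omega>) \<ge> real (id N) / real N + eps k) sequentially"
        and H3: "eventually (\<lambda>N. \<not> (\<Sum>j\<in>{1..f2 k N}. ?c N j \<omega>) \<ge> real (f2 k N) / real N + eps k) sequentially"
        and H4: "eventually (\<lambda>N. \<not> (\<Sum>j\<in>{1..f3 k N}. t N j \<omega>) \<le> real (f3 k N) / real N - eps k) sequentially"
        using H[of k] by auto
      show "eventually (\<lambda>N. \<bar>tau (t N) N \<omega> - 1\<bar> \<le> eps k \<and> tau (t N) (f2 k N) \<omega> < 1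
                 \<and> tau (t N) (f3 k N) \<omega> > 1) sequentially"
        using eventually_conj[OF eventually_ge_at_top[of 1] eventually_conj[OF Hmax
              eventually_conj[OF H1 eventually_conj[OF H2 eventually_conj[OF H3 H4]]]]]
      proof (rule eventually_mono)
        fix N :: nat
        assume A: "1 \<le> N \<and> (\<forall>j\<in>{1..3*N}. t N j \<omega> \<le> real N powr (- aa))
          \<and> \<not> (\<Sum>j\<in>{1..id N}. t N j \<omega>) \<le> real (id N) / real N - eps k
          \<and> \<not> (\<Sum>j\<in>{1..id N}. ?c N j \<omega>) \<ge> real (id N) / real N + eps k
          \<and> \<not> (\<Sum>j\<in>{1..f2 k N}. ?c N j \<omega>) \<ge> real (f2 k N) / real N + eps k
          \<and> \<not> (\<Sum>j\<in>{1..f3 k N}. t N j \<omega>) \<le> real (f3 k N) / real N - eps k"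
        then have N: "1 \<le> N" and mx: "\<forall>j\<in>{1..3*N}. t N j \<omega> \<le> real N powr (- aa)" by auto
        have rN: "real N \<ge> 1" using N by simp
        have NN: "real N / real N = 1" using N by simp
        have c1: "(\<Sum>j\<in>{1..N}. ?c N j \<omega>) = tau (t N) N \<omega>" by (rule clamp_sum[OF N _ w mx]) simp
        have c2: "(\<Sum>j\<in>{1..f2 k N}. ?c N j \<omega>) = tau (t N) (f2 k N) \<omega>"
          by (rule clamp_sum[OF N _ w mx]) (use f2_props(1)[of k N] in simp)
        have N0: "N \<noteq> 0" using N by simp
        have A1: "\<not> (\<Sum>j\<in>{1..N}. t N j \<omega>) \<le> 1 - eps k" using A N0 by auto
        have t1: "tau (t N) N \<omega> > 1 - eps k" using A1 by (simp add: tau_def)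
        have A2: "\<not> (\<Sum>j\<in>{1..N}. ?c N j \<omega>) \<ge> 1 + eps k" using A N0 by auto
        have t2: "tau (t N) N \<omega> < 1 + eps k" using A2 c1 by simp
        have f2r: "real (f2 k N) / real N \<le> 1 - 3 * eps k"
          using f2_le[of k N] rN by (simp add: divide_le_eq)
        have f3r: "real (f3 k N) / real N \<ge> 1 + 3 * eps k"
          using f3_ge[of k N] rN by (simp add: le_divide_eq)
        have t3: "tau (t N) (f2 k N) \<omega> < 1" using A c2 f2r eps_pos[of k] by simp
        have t4: "tau (t N) (f3 k N) \<omega> > 1" using A f3r eps_pos[of k] by (simp add: tau_def)
        show "\<bar>tau (t N) N \<omega> - 1\<bar> \<le> eps k \<and> tau (t N) (f2 k N) \<omega> < 1 \<and> tau (t N) (f3 k N) \<omega> > 1"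
          using t1 t2 t3 t4 by auto
      qed
    qed
  qed
qed

end



theorem lemma4p4:
  fixes M :: "'a measure" and t :: "nat \<Rightarrow> nat \<Rightarrow> 'a \<Rightarrow> real"
    and r C :: real
  assumes "prob_space M"
    and rv: "\<And>N j. 1 \<le> N \<Longrightarrow> 1 \<le> j \<Longrightarrow> t N j \<in> borel_measurable M"
    and pos: "\<And>N j \<omega>. 1 \<le> N \<Longrightarrow> 1 \<le> j \<Longrightarrow> \<omega> \<in> space M \<Longrightarrow> t N j \<omega> > 0"
    and mean_int: "\<And>N j. 1 \<le> N \<Longrightarrow> 1 \<le> j \<Longrightarrow> integrable M (t N j)"
    and mean: "\<And>N j. 1 \<le> N \<Longrightarrow> 1 \<le> j \<Longrightarrow> (\<integral>\<omega>. t N j \<omega> \<partial>M) = 1 / real N"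
    and r_pos: "r > 0" and C_pos: "C > 0"
    and mom_int: "\<And>N j. 1 \<le> N \<Longrightarrow> 1 \<le> j \<Longrightarrow> integrable M (\<lambda>\<omega>. t N j \<omega> powr (2 + r))"
    and mom: "\<And>N j. 1 \<le> N \<Longrightarrow> 1 \<le> j \<Longrightarrow>
               (\<integral>\<omega>. t N j \<omega> powr (2 + r) \<partial>M) \<le> C / real N powr (2 + r)"
    and nsd: "\<And>N m. 1 \<le> N \<Longrightarrow> nsd M (t N) {1..m}"
  shows "AE \<omega> in M.
           (\<forall>\<^sub>F N in sequentially. finite (count_set (t N) \<omega>))
         \<and> ((\<lambda>N. real (card (count_set (t N) \<omega>)) / real N) \<longlonglongrightarrow> 1)
         \<and> ((\<lambda>N. \<bar>tau (t N) (card (count_set (t N) \<omega>)) \<omega> - tau (t N) N \<omega>\<bar>) \<longlonglongrightarrow> 0)"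
proof -
  have S: "setting M t r C"
    by (rule setting.intro[OF assms(1) setting_axioms.intro]) (fact assms)+
  show ?thesis by (rule setting.main[OF S])
qed

end
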